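(* Let $N>2$, $a>0$, and assume (H1)–(H4). Let $v_a$ be the solution of $(P_a)$ on $[0,R^{2-N}]$. Then $v_a$ has at most a finite number of zeros on $[0,R^{2-N}]$.
   Context: Fix $N>2$, $R>0$, $0<\delta<2$. The function $f:\mathbb{R}\setminus\{0\}\to\mathbb{R}$ is odd and locally Lipschitz and satisfies: (H1) there exist $p>1$ and a function $g$ with $f(u)=|u|^{p-1}u+g(u)$ for all sufficiently large $|u|$, and $\lim_{u\to\infty}|g(u)|/|u|^{p}=0$; (H2) there exist $0<q<1$ and a locally Lipschitz $g_1:\mathbb{R}\to\mathbb{R}$ with $g_1(0)=0$ such that $f(u)=-\frac{1}{|u|^{q-1}u}+g_1(u)$ for all sufficiently small $|u|\neq 0$; (H3) $f$ has a unique positive zero $\beta$, with $f<0$ on $(0,\beta)$ and $f>0$ on $(\beta,\infty)$. $K:[R,\infty)\to(0,\infty)$ with $K$ and $K'$ continuous, and (H4) $\frac{rK'(r)}{K(r)}>-2(N-1)$ on $[R,\infty)$, and there exist $K_0,K_1>0$ and exponents with $N+q(N-2)<\alpha_1\leq\alpha<2(N-1)$ such that $K_0r^{-\alpha}\leq K(r)\leq K_1r^{-\alpha_1}$ on $[R,\infty)$. Define $h(t)=\frac{t^{\frac{2(N-1)}{2-N}}K(t^{\frac{1}{2-N}})}{(N-2)^2}$ for $0<t\le R^{2-N}$. The initial value problem $(P_a)$ is $$v''(t)+h(t)f(v(t))+\frac{v(t)}{t^{2-\delta}}=0\ (t>0),\qquad v(0)=0,\ v'(0)=a,$$ understood in the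 integrated sense: $v\in C^1[0,R^{2-N}]$, $v(0)=0$, $h f(v)$ integrable, and $v'(t)=a-\int_0^t h(s)f(v(s))\,ds-\int_0^t s^{\delta-2}v(s)\,ds$ for all $t\in[0,R^{2-N}]$. This solution exists on all of $[0,R^{2-N}]$ and is unique. *)

theory Defs
  imports "HOL-Analysis.Analysis"
begin

definition loc_lipschitz_on :: "real set \<Rightarrow> (real \<Rightarrow> real) \<Rightarrow> bool" where
  "loc_lipschitz_on S f \<longleftrightarrow>
     (\<forall>x\<in>S. \<exists>e>0. \<exists>L. L-lipschitz_on (cball x e \<inter> S) f)"

definition h_coef :: "nat \<Rightarrow> (real \<Rightarrow> real) \<Rightarrow> real \<Rightarrow> real" where
  "h_coef N K t =
     t powr (2 * (real N - 1) / (2 - real N)) * K (t powr (1 / (2 - real N)))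
       / (real N - 2)\<^sup>2"

text \<open>v solves (P_a) on [0, R^(2-N)] in the integrated sense. Since f is only
  defined on the nonzero reals, h f(v) being (defined and) integrable includes that
  v vanishes only on a null set.\<close>
definition solves_Pa ::
  "nat \<Rightarrow> real \<Rightarrow> real \<Rightarrow> (real \<Rightarrow> real) \<Rightarrow> (real \<Rightarrow> real) \<Rightarrow> real \<Rightarrow> (real \<Rightarrow> real) \<Rightarrow> bool" where
  "solves_Pa N R \<delta> K f a v \<longleftrightarrow>
     (let T = R powr (2 - real N) in
      \<exists>v'. (\<forall>t\<in>{0..T}. (v has_real_derivative v' t) (at t within {0..T}))
        \<and> continuous_on {0..T} v'
        \<and> v 0 = 0
        \<and> negligible {t\<in>{0..T}. v t = 0}
        \<and> (\<lambda>s. h_coef N K s * f (v s)) absolutely_integrable_on {0..T}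
        \<and> (\<forall>t\<in>{0..T}. (\<lambda>s. s powr (\<delta> - 2) * v s) integrable_on {0..t})
        \<and> (\<forall>t\<in>{0..T}. v' t = a - integral {0..t} (\<lambda>s. h_coef N K s * f (v s))
                                  - integral {0..t} (\<lambda>s. s powr (\<delta> - 2) * v s)))"

end

theory Submission
  imports Defs
begin


lemma mvt_real:
  fixes w w' :: "real \<Rightarrow> real"
  assumes "a < b" "\<And>x. x \<in> {a..b} \<Longrightarrow> (w has_real_derivative w' x) (at x within {a..b})"
  shows "\<exists>\<xi>\<in>{a<..<b}. w b - w a = w' \<xi> * (b - a)"
proof -
  have "\<exists>x\<in>{a<..<b}. w b - w a = (*) (w' x) (b - a)"
    by (rule mvt_simple[OF assms(1)]) (use assms(2) has_field_derivative_imp_has_derivative in auto)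
  then show ?thesis by simp
qed

lemma no_bump:
  fixes w w' :: "real \<Rightarrow> real"
  assumes "c < s" "s < d"
    and der: "\<And>x. x \<in> {c..d} \<Longrightarrow> (w has_real_derivative w' x) (at x within {c..d})"
    and "w c = 0" "w d = 0" "w s > 0"
    and mono: "\<And>x y. c < x \<Longrightarrow> x < y \<Longrightarrow> y < d \<Longrightarrow> w' x \<le> w' y"
  shows False
proof -
  have d1: "\<And>x. x \<in> {c..s} \<Longrightarrow> (w has_real_derivative w' x) (at x within {c..s})"
    by (rule DERIV_subset[OF der]) (use assms(1,2) in auto)
  have d2: "\<And>x. x \<in> {s..d} \<Longrightarrow> (w has_real_derivative w' x) (at x within {s..d})"
    by (rule DERIV_subset[OF der]) (use assms(1,2) in auto)
  obtain x1 where x1: "x1 \<in> {c<..<s}" "w s - w c = w' x1 * (s - c)"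
    using mvt_real[OF assms(1) d1] by blast
  obtain x2 where x2: "x2 \<in> {s<..<d}" "w d - w s = w' x2 * (d - s)"
    using mvt_real[OF assms(2) d2] by blast
  have "w' x1 > 0" using x1 assms by (metis diff_zero greaterThanLessThan_iff zero_less_mult_pos2 diff_gt_0_iff_gt)
  moreover have "w' x2 < 0"
  proof -
    have "w' x2 * (d - s) < 0" using x2 assms by simp
    moreover have "d - s > 0" using assms by simp
    ultimately show ?thesis by (simp add: mult_less_0_iff)
  qed
  moreover have "w' x1 \<le> w' x2" using mono x1 x2 by auto
  ultimately show False by linarith
qed

lemma sign_lemma:
  fixes H P C hm L q u G :: real
  assumes "hm \<le> H" "0 < hm" "P \<le> C" "0 < u" "u \<le> 1" "G \<le> L * u" "2 * L * u \<le> 1"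
    "2 * C * u < hm" "0 < q"
  shows "H * (- 1 / (u powr (q - 1) * u) + G) + P * u < 0"
proof -
  have e: "u powr (q - 1) * u = u powr q"
  proof -
    have "u powr (q - 1) * u powr 1 = u powr q" using powr_add[of u "q - 1" 1] by simp
    then show ?thesis using assms(4) by simp
  qed
  have "u powr q \<le> 1" using assms by (intro powr_le1) auto
  moreover have "u powr q > 0" using assms by simp
  ultimately have X: "1 / (u powr q) \<ge> 1" by simp
  have "- 1 / (u powr q) + G \<le> - 1/2" using X assms(6,7) by (simp add: field_simps)
  hence "H * (- 1 / (u powr q) + G) \<le> H * (-1/2)"
    using assms(1,2) by (intro mult_left_mono) auto
  moreover have "P * u \<le> C * u" using assms by (intro mult_right_mono) auto
  ultimately show ?thesis unfolding e using assms by linarith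
qed



lemma h_lower:
  fixes N :: nat and R K0 \<alpha> t :: real and K :: "real \<Rightarrow> real"
  assumes N: "N > 2" and R: "R > 0" and K0: "K0 > 0" and al: "\<alpha> < 2 * (real N - 1)"
    and Kb: "\<forall>r\<ge>R. K0 * r powr (- \<alpha>) \<le> K r"
    and t: "0 < t" "t \<le> R powr (2 - real N)"
  shows "K0 * (R powr (2 - real N)) powr ((2 * (real N - 1) - \<alpha>) / (2 - real N)) / (real N - 2)\<^sup>2
           \<le> h_coef N K t"
proof -
  define T where "T = R powr (2 - real N)"
  have Npos: "2 - real N < 0" using N by simp
  have e2: "1 / (2 - real N) \<le> 0" using Npos by simp
  have "T powr (1 / (2 - real N)) \<le> t powr (1 / (2 - real N))"
    using powr_mono2'[OF e2 t(1)] t(2) unfolding T_def by simp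
  moreover have "T powr (1 / (2 - real N)) = R"
    unfolding T_def using R Npos by (simp add: powr_powr)
  ultimately have rR: "t powr (1 / (2 - real N)) \<ge> R" by simp
  have Kr: "K (t powr (1 / (2 - real N))) \<ge> K0 * t powr (- \<alpha> / (2 - real N))"
  proof -
    have "K0 * (t powr (1 / (2 - real N))) powr (- \<alpha>) \<le> K (t powr (1 / (2 - real N)))"
      using Kb rR by blast
    moreover have "(t powr (1 / (2 - real N))) powr (- \<alpha>) = t powr (- \<alpha> / (2 - real N))"
      by (simp add: powr_powr)
    ultimately show ?thesis by simp
  qed
  have e3: "(2 * (real N - 1) - \<alpha>) / (2 - real N) \<le> 0"
    using Npos al by (simp add: divide_nonneg_neg)
  have tp: "t powr (2 * (real N - 1) / (2 - real N)) > 0" using t by simp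
  have "t powr (2 * (real N - 1) / (2 - real N)) * (K0 * t powr (- \<alpha> / (2 - real N)))
        = K0 * t powr ((2 * (real N - 1) - \<alpha>) / (2 - real N))"
    by (simp add: powr_add[symmetric] diff_divide_distrib)
  moreover have "T powr ((2 * (real N - 1) - \<alpha>) / (2 - real N)) \<le> t powr ((2 * (real N - 1) - \<alpha>) / (2 - real N))"
    using powr_mono2'[OF e3 t(1)] t(2) unfolding T_def by simp
  moreover have "K0 * T powr ((2 * (real N - 1) - \<alpha>) / (2 - real N)) \<le> K0 * t powr ((2 * (real N - 1) - \<alpha>) / (2 - real N))"
    by (rule mult_left_mono[OF calculation(2)]) (use K0 in simp)
  ultimately have "K0 * T powr ((2 * (real N - 1) - \<alpha>) / (2 - real N))
      \<le> t powr (2 * (real N - 1) / (2 - real N)) * K (t powr (1 / (2 - real N)))"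
    using mult_left_mono[OF Kr less_imp_le[OF tp]] by linarith
  then show ?thesis unfolding h_coef_def T_def
    by (intro divide_right_mono) auto
qed



theorem lemma2p4:
  fixes N :: nat and R \<delta> a p q \<beta> :: real
    and f g g1 K K' :: "real \<Rightarrow> real"
    and K0 K1 \<alpha> \<alpha>1 :: real
    and v :: "real \<Rightarrow> real"
  assumes N: "N > 2" and R: "R > 0" and \<delta>: "0 < \<delta>" "\<delta> < 2"
    and f_odd: "\<forall>u. u \<noteq> 0 \<longrightarrow> f (- u) = - f u"
    and f_lip: "loc_lipschitz_on (- {0}) f"
    and H1_p: "p > 1"
    and H1_eq: "\<exists>M. \<forall>u. \<bar>u\<bar> \<ge> M \<longrightarrow> f u = \<bar>u\<bar> powr (p - 1) * u + g u"
    and H1_lim: "((\<lambda>u. \<bar>g u\<bar> / \<bar>u\<bar> powr p) \<longlongrightarrow> 0) at_top"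
    and H2_q: "0 < q" "q < 1"
    and H2_g1: "loc_lipschitz_on UNIV g1" "g1 0 = 0"
    and H2_eq: "\<exists>\<epsilon>>0. \<forall>u. u \<noteq> 0 \<and> \<bar>u\<bar> < \<epsilon> \<longrightarrow>
                   f u = - 1 / (\<bar>u\<bar> powr (q - 1) * u) + g1 u"
    and H3: "\<beta> > 0" "f \<beta> = 0" "\<forall>u>0. f u = 0 \<longrightarrow> u = \<beta>"
            "\<forall>u. 0 < u \<and> u < \<beta> \<longrightarrow> f u < 0" "\<forall>u>\<beta>. f u > 0"
    and K_pos: "\<forall>r\<ge>R. K r > 0"
    and K_deriv: "\<forall>r\<ge>R. (K has_real_derivative K' r) (at r within {R..})"
    and K'_cont: "continuous_on {R..} K'"
    and H4_a: "\<forall>r\<ge>R. r * K' r / K r > - 2 * (real N - 1)"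
    and H4_b: "K0 > 0" "K1 > 0" "real N + q * (real N - 2) < \<alpha>1" "\<alpha>1 \<le> \<alpha>"
              "\<alpha> < 2 * (real N - 1)"
    and H4_c: "\<forall>r\<ge>R. K0 * r powr (- \<alpha>) \<le> K r \<and> K r \<le> K1 * r powr (- \<alpha>1)"
    and a: "a > 0"
    and sol: "solves_Pa N R \<delta> K f a v"
  shows "finite {t \<in> {0..R powr (2 - real N)}. v t = 0}"
  proof -
  define T where "T = R powr (2 - real N)"
  have Tpos: "T > 0" using R by (simp add: T_def)
  obtain v' where
    der: "\<forall>t\<in>{0..T}. (v has_real_derivative v' t) (at t within {0..T})"
    and v'c: "continuous_on {0..T} v'"
    and v0: "v 0 = 0"
    and negl: "negligible {t\<in>{0..T}. v t = 0}"
    and int1: "(\<lambda>s. h_coef N K s * f (v s)) absolutely_integrable_on {0..T}"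
    and int2: "\<forall>t\<in>{0..T}. (\<lambda>s. s powr (\<delta> - 2) * v s) integrable_on {0..t}"
    and eq: "\<forall>t\<in>{0..T}. v' t = a - integral {0..t} (\<lambda>s. h_coef N K s * f (v s))
                                  - integral {0..t} (\<lambda>s. s powr (\<delta> - 2) * v s)"
    using sol unfolding solves_Pa_def Let_def T_def[symmetric] by blast
  define F where "F s = h_coef N K s * f (v s) + s powr (\<delta> - 2) * v s" for s
  have vc: "continuous_on {0..T} v" using der by (intro DERIV_continuous_on) auto
  define Z where "Z = {t\<in>{0..T}. v t = 0}"
  have Zc: "closed Z" unfolding Z_def by (rule continuous_closed_preimage_constant[OF vc]) auto
  have Zb: "bounded Z" unfolding Z_def by (rule bounded_subset[of "{0..T}"]) auto
  have Zcomp: "compact Z" using Zc Zb by (simp add: compact_eq_bounded_closed)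
  have v'0: "v' 0 = a" using eq Tpos by simp
  have i1T: "(\<lambda>s. h_coef N K s * f (v s)) integrable_on {0..T}"
    using int1 set_lebesgue_integral_eq_integral(1) by blast
  have Fint: "F integrable_on {x..y}" if "0 \<le> x" "y \<le> T" for x y
  proof -
    have "(\<lambda>s. h_coef N K s * f (v s)) integrable_on {x..y}"
      by (rule integrable_on_subinterval[OF i1T]) (use that in auto)
    moreover have "(\<lambda>s. s powr (\<delta> - 2) * v s) integrable_on {x..y}"
    proof (cases "x \<le> y")
      case True
      show ?thesis
        by (rule integrable_on_subinterval[of _ "{0..y}"]) (use int2 that True in auto)
    next
      case False then show ?thesis by (simp add: integrable_on_empty)
    qed
    ultimately show ?thesis unfolding F_def by (rule integrable_add)
  qed
  have diff: "v' y - v' x = - integral {x..y} F" if "0 \<le> x" "x \<le> y" "y \<le> T" for x y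
  proof -
    have i1: "(\<lambda>s. h_coef N K s * f (v s)) integrable_on {0..y}"
      by (rule integrable_on_subinterval[OF i1T]) (use that in auto)
    have i2: "(\<lambda>s. s powr (\<delta> - 2) * v s) integrable_on {0..y}"
      using int2 that by auto
    have c1: "integral {0..x} (\<lambda>s. h_coef N K s * f (v s)) + integral {x..y} (\<lambda>s. h_coef N K s * f (v s))
       = integral {0..y} (\<lambda>s. h_coef N K s * f (v s))"
      by (rule Henstock_Kurzweil_Integration.integral_combine[OF that(1,2) i1])
    have c2: "integral {0..x} (\<lambda>s. s powr (\<delta> - 2) * v s) + integral {x..y} (\<lambda>s. s powr (\<delta> - 2) * v s)
       = integral {0..y} (\<lambda>s. s powr (\<delta> - 2) * v s)"
      by (rule Henstock_Kurzweil_Integration.integral_combine[OF that(1,2) i2])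
    have "integral {x..y} F = integral {x..y} (\<lambda>s. h_coef N K s * f (v s)) + integral {x..y} (\<lambda>s. s powr (\<delta> - 2) * v s)"
      unfolding F_def
      by (rule integral_add; rule integrable_on_subinterval[OF i1] integrable_on_subinterval[OF i2]) (use that in auto)
    moreover have "v' y = a - integral {0..y} (\<lambda>s. h_coef N K s * f (v s)) - integral {0..y} (\<lambda>s. s powr (\<delta> - 2) * v s)"
      using eq that by auto
    moreover have "v' x = a - integral {0..x} (\<lambda>s. h_coef N K s * f (v s)) - integral {0..x} (\<lambda>s. s powr (\<delta> - 2) * v s)"
      using eq that by auto
    ultimately show ?thesis using c1 c2 by linarith
  qed
  show ?thesis
  proof (rule ccontr)
    assume "infinite {t \<in> {0..R powr (2 - real N)}. v t = 0}"
    then have inf: "infinite Z" unfolding Z_def T_def .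
    obtain z where z: "z \<in> Z" "z islimpt Z"
      using Heine_Borel_imp_Bolzano_Weierstrass[OF Zcomp inf] by blast
    have z0T: "0 \<le> z" "z \<le> T" "v z = 0" using z(1) unfolding Z_def by auto
    show False
    proof (cases "z = 0")
      case True
      obtain \<eta> where \<eta>: "\<eta> > 0" "\<forall>x'\<in>{0..T}. dist x' 0 < \<eta> \<longrightarrow> dist (v' x') (v' 0) < a"
        using continuous_on_iff[THEN iffD1, OF v'c, rule_format, of 0 a] Tpos a by auto
      obtain t where t: "t \<in> Z" "t \<noteq> 0" "dist t 0 < \<eta>"
        using islimpt_approachable[THEN iffD1, OF z(2), rule_format, of \<eta>] \<eta>(1) True by auto
      have t0T: "0 < t" "t \<le> T" "v t = 0" using t unfolding Z_def by auto
      have dd: "\<And>x. x \<in> {0..t} \<Longrightarrow> (v has_real_derivative v' x) (at x within {0..t})"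
        by (rule DERIV_subset[of _ _ _ "{0..T}"]) (use der t0T in auto)
      obtain \<xi> where \<xi>: "\<xi> \<in> {0<..<t}" "v t - v 0 = v' \<xi> * (t - 0)"
        using mvt_real[OF t0T(1) dd] by blast
      have "dist \<xi> 0 < \<eta>" using \<xi>(1) t(3) by (simp add: dist_real_def)
      then have "dist (v' \<xi>) a < a" using \<eta>(2) \<xi>(1) t0T v'0 by auto
      then have "v' \<xi> > 0" by (simp add: dist_real_def)
      then have "v t > 0" using \<xi> v0 t0T by simp
      then show False using t0T by simp
    next
      case False
      then have zpos: "z > 0" using z0T by simp
      obtain \<rho> L where \<rho>: "\<rho> > 0" "L-lipschitz_on (cball 0 \<rho> \<inter> UNIV) g1"
        using H2_g1(1) unfolding loc_lipschitz_on_def by blast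
      have L0: "L \<ge> 0" using \<rho>(2) lipschitz_on_nonneg by blast
      have g1b: "g1 u \<le> L * u" if "0 < u" "u \<le> \<rho>" for u
      proof -
        have "dist (g1 u) (g1 0) \<le> L * dist u 0"
          by (rule lipschitz_onD[OF \<rho>(2)]) (use that \<rho> in auto)
        then show ?thesis using H2_g1(2) that by (simp add: dist_real_def)
      qed
      obtain \<epsilon> where \<epsilon>: "\<epsilon> > 0" "\<forall>u. u \<noteq> 0 \<and> \<bar>u\<bar> < \<epsilon> \<longrightarrow>
                   f u = - 1 / (\<bar>u\<bar> powr (q - 1) * u) + g1 u"
        using H2_eq by blast
      define hm where "hm = K0 * T powr ((2 * (real N - 1) - \<alpha>) / (2 - real N)) / (real N - 2)\<^sup>2"
      have hm0: "hm > 0" unfolding hm_def using H4_b Tpos N by simp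
      have hmle: "hm \<le> h_coef N K s" if "0 < s" "s \<le> T" for s
        unfolding hm_def T_def
        by (rule h_lower[OF N R H4_b(1) H4_b(5)]) (use H4_c that T_def in auto)
      define C where "C = (z/2) powr (\<delta> - 2)"
      have C0: "C > 0" unfolding C_def using zpos by simp
      have Cle: "s powr (\<delta> - 2) \<le> C" if "z/2 \<le> s" for s
        unfolding C_def by (rule powr_mono2') (use \<delta> zpos that in auto)
      define \<epsilon>0 where "\<epsilon>0 = min (min 1 \<epsilon>) (min \<rho> (min (1 / (2 * L + 1)) (hm / (2 * C + 1))))"
      have e00: "\<epsilon>0 > 0" unfolding \<epsilon>0_def using \<epsilon> \<rho> L0 hm0 C0 by simp
      have Fsign: "h_coef N K s * f u + s powr (\<delta> - 2) * u < 0"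
        if s: "z/2 \<le> s" "s \<le> T" and u: "0 < u" "u < \<epsilon>0" for s u
      proof -
        have u1: "u \<le> 1" "u < \<epsilon>" "u \<le> \<rho>" "u \<le> 1 / (2 * L + 1)" "u \<le> hm / (2 * C + 1)"
          using u unfolding \<epsilon>0_def by auto
        have fu: "f u = - 1 / (u powr (q - 1) * u) + g1 u" using \<epsilon>(2) u u1 by auto
        have a1: "2 * L * u \<le> 1"
        proof -
          have "u * (2 * L + 1) \<le> 1" using u1(4) L0 by (simp add: field_simps)
          then show ?thesis using u by (simp add: algebra_simps)
        qed
        have a2: "2 * C * u < hm"
        proof -
          have "u * (2 * C + 1) \<le> hm" using u1(5) C0 by (simp add: field_simps)
          then show ?thesis using u by (simp add: algebra_simps)
        qed
        have s0: "0 < s" using s zpos by simp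
        have hh: "hm \<le> h_coef N K s" by (rule hmle[OF s0 s(2)])
        have cc: "s powr (\<delta> - 2) \<le> C" by (rule Cle[OF s(1)])
        have gg: "g1 u \<le> L * u" by (rule g1b) (use u u1 in auto)
        show ?thesis unfolding fu
          by (rule sign_lemma[OF hh hm0 cc u(1) u1(1) gg a1 a2 H2_q(1)])
      qed
      obtain \<eta> where \<eta>: "\<eta> > 0" "\<forall>x'\<in>{0..T}. dist x' z < \<eta> \<longrightarrow> dist (v x') (v z) < \<epsilon>0"
        using continuous_on_iff[THEN iffD1, OF vc, rule_format, of z \<epsilon>0] z0T e00 by auto
      obtain t1 where t1: "t1 \<in> Z" "t1 \<noteq> z" "dist t1 z < min \<eta> (z/2)"
        using islimpt_approachable[THEN iffD1, OF z(2), rule_format, of "min \<eta> (z/2)"] \<eta>(1) zpos by auto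
      have t1b: "0 \<le> t1" "t1 \<le> T" "v t1 = 0" using t1(1) unfolding Z_def by auto
      define lo where "lo = min t1 z"
      define hi where "hi = max t1 z"
      have lohi: "lo < hi" "v lo = 0" "v hi = 0" "0 \<le> lo" "hi \<le> T"
        unfolding lo_def hi_def using t1 t1b z0T by auto
      have inI: "s \<in> {0..T} \<and> z/2 \<le> s \<and> \<bar>v s\<bar> < \<epsilon>0" if "lo \<le> s" "s \<le> hi" for s
      proof -
        have sz: "\<bar>s - z\<bar> \<le> \<bar>t1 - z\<bar>"
          using that unfolding lo_def hi_def min_def max_def by (auto split: if_splits)
        have d1: "dist s z < \<eta>" using sz t1(3) unfolding dist_real_def by auto
        have "\<bar>s - z\<bar> < z/2" using sz t1(3) unfolding dist_real_def by auto
        then have d2: "z/2 \<le> s" by linarith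
        have sI: "s \<in> {0..T}" using that lohi by auto
        have "\<bar>v s\<bar> < \<epsilon>0" using \<eta>(2) sI d1 z0T by (auto simp: dist_real_def)
        then show ?thesis using sI d2 by blast
      qed
      have "\<not> {lo..hi} \<subseteq> Z"
      proof
        assume "{lo..hi} \<subseteq> Z"
        then have "negligible {lo..hi}" using negl negligible_subset unfolding Z_def by blast
        then have "box lo hi = {}" using negligible_interval(1)[of lo hi] by simp
        then show False using lohi(1) by (simp add: box_real)
      qed
      then have "\<exists>s\<in>{lo..hi}. v s \<noteq> 0"
        using inI unfolding Z_def subset_iff by auto
      then obtain s where s: "lo \<le> s" "s \<le> hi" "v s \<noteq> 0" by auto
      have slohi: "lo < s" "s < hi" using s lohi by (auto simp: order.order_iff_strict)
      define S1 where "S1 = {t\<in>{lo..s}. v t = 0}"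
      have S1c: "closed S1" unfolding S1_def
        by (rule continuous_closed_preimage_constant[OF continuous_on_subset[OF vc]]) (use lohi slohi in auto)
      define c where "c = Sup S1"
      have cS1: "c \<in> S1" unfolding c_def
      proof (rule closed_contains_Sup)
        have "lo \<in> S1" using lohi slohi unfolding S1_def by auto
        then show "S1 \<noteq> {}" by blast
        show "bdd_above S1" unfolding S1_def bdd_above_def by auto
      qed (rule S1c)
      have cprop: "lo \<le> c" "c < s" "v c = 0"
        using cS1 s unfolding S1_def by (auto simp: order.order_iff_strict)
      have cnz: "v t \<noteq> 0" if "c < t" "t \<le> s" for t
      proof
        assume "v t = 0"
        then have "t \<in> S1" using that cprop unfolding S1_def by auto
        then have "t \<le> c" unfolding c_def by (rule cSup_upper) (auto simp: S1_def bdd_above_def)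
        then show False using that by simp
      qed
      define S2 where "S2 = {t\<in>{s..hi}. v t = 0}"
      have S2c: "closed S2" unfolding S2_def
        by (rule continuous_closed_preimage_constant[OF continuous_on_subset[OF vc]]) (use lohi slohi in auto)
      define d where "d = Inf S2"
      have dS2: "d \<in> S2" unfolding d_def
      proof (rule closed_contains_Inf)
        have "hi \<in> S2" using lohi slohi unfolding S2_def by auto
        then show "S2 \<noteq> {}" by blast
        show "bdd_below S2" unfolding S2_def bdd_below_def by auto
      qed (rule S2c)
      have dprop: "d \<le> hi" "s < d" "v d = 0"
        using dS2 s unfolding S2_def by (auto simp: order.order_iff_strict)
      have dnz: "v t \<noteq> 0" if "s \<le> t" "t < d" for t
      proof
        assume "v t = 0"
        then have "t \<in> S2" using that dprop unfolding S2_def by auto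
        then have "d \<le> t" unfolding d_def by (rule cInf_lower) (auto simp: S2_def bdd_below_def)
        then show False using that by simp
      qed
      have nz: "v t \<noteq> 0" if "c < t" "t < d" for t
        using cnz dnz that by (cases "t \<le> s") auto
      define \<sigma> :: real where "\<sigma> = (if v s > 0 then 1 else -1)"
      have \<sigma>s: "\<sigma> * v s > 0" using s(3) unfolding \<sigma>_def by auto
      have \<sigma>ne: "\<sigma> \<noteq> 0" unfolding \<sigma>_def by auto
      have vcd: "continuous_on {c..d} (\<lambda>x. \<sigma> * v x)"
        by (intro continuous_intros continuous_on_subset[OF vc]) (use cprop dprop lohi in auto)
      have pos: "\<sigma> * v t > 0" if "c < t" "t < d" for t
      proof (rule ccontr)
        assume neg: "\<not> \<sigma> * v t > 0"
        show False
        proof (cases "t \<le> s")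
          case True
          have "continuous_on {t..s} (\<lambda>x. \<sigma> * v x)"
            by (rule continuous_on_subset[OF vcd]) (use that True cprop dprop in auto)
          then obtain x where "t \<le> x" "x \<le> s" "\<sigma> * v x = 0"
            using IVT'[of "\<lambda>x. \<sigma> * v x" t 0 s] neg \<sigma>s True by force
          then show False using nz[of x] that \<sigma>ne dprop by auto
        next
          case False
          have "continuous_on {s..t} (\<lambda>x. \<sigma> * v x)"
            by (rule continuous_on_subset[OF vcd]) (use that False cprop dprop in auto)
          then obtain x where "s \<le> x" "x \<le> t" "\<sigma> * v x = 0"
            using IVT2'[of "\<lambda>x. \<sigma> * v x" t 0 s] neg \<sigma>s False by force
          then show False using nz[of x] that \<sigma>ne cprop by auto
        qed
      qed
      have cdI: "c \<ge> lo" "d \<le> hi" using cprop dprop by auto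
      have \<sigma>F: "\<sigma> * F t < 0" if "c < t" "t < d" for t
      proof -
        have I: "t \<in> {0..T}" "z/2 \<le> t" "\<bar>v t\<bar> < \<epsilon>0" using inI[of t] that cdI by auto
        show ?thesis
        proof (cases "v s > 0")
          case True
          then have "v t > 0" using pos[OF that] unfolding \<sigma>_def by simp
          then show ?thesis using Fsign[of t "v t"] I True unfolding F_def \<sigma>_def by auto
        next
          case False
          then have vt: "v t < 0" using pos[OF that] unfolding \<sigma>_def by simp
          then have "f (v t) = - f (- v t)" using f_odd by (metis minus_minus neg_0_equal_iff_equal less_irrefl)
          moreover have "h_coef N K t * f (- v t) + t powr (\<delta> - 2) * (- v t) < 0"
            using Fsign[of t "- v t"] I vt by auto
          ultimately show ?thesis using False unfolding F_def \<sigma>_def by (simp add: algebra_simps)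
        qed
      qed
      have mono: "\<sigma> * v' x \<le> \<sigma> * v' y" if "c < x" "x < y" "y < d" for x y
      proof -
        have x0: "0 \<le> x" "y \<le> T" using that cprop dprop lohi by auto
        have dv: "v' y - v' x = - integral {x..y} F" using diff[of x y] x0 that by auto
        moreover have "0 \<le> integral {x..y} (\<lambda>t. (- \<sigma>) * F t)"
        proof (rule integral_nonneg[OF integrable_on_mult_right[OF Fint[OF x0]]])
          fix t assume "t \<in> {x..y}"
          then have "c < t" "t < d" using that by auto
          then have "\<sigma> * F t < 0" by (rule \<sigma>F)
          then show "0 \<le> - \<sigma> * F t" by simp
        qed
        ultimately have "\<sigma> * integral {x..y} F \<le> 0" by (simp add: integral_mult_right)
        moreover have "\<sigma> * v' x = \<sigma> * v' y + \<sigma> * integral {x..y} F"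
        proof -
          have "v' x = v' y + integral {x..y} F" using dv by simp
          then show ?thesis by (simp add: distrib_left)
        qed
        ultimately show ?thesis by linarith
      qed
      have dercd: "((\<lambda>x. \<sigma> * v x) has_real_derivative \<sigma> * v' x) (at x within {c..d})" if "x \<in> {c..d}" for x
        by (rule DERIV_cmult, rule DERIV_subset[of _ _ _ "{0..T}"]) (use der that cprop dprop lohi in auto)
      show False
        by (rule no_bump[of c s d "\<lambda>x. \<sigma> * v x" "\<lambda>x. \<sigma> * v' x", OF cprop(2) dprop(2) dercd])
           (use cprop dprop \<sigma>s mono in auto)
    qed
  qed
qed

end
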